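(* Let $m\ge2$ be even, $n\ge2$, and let $g,h\in\mathbb{R}$ with $h\neq0$ and $g/h\notin\mathbb{Z}$. Let $\mathcal{A}$ be the Cauchy-Hankel tensor of order $m$ and dimension $n$ with entries $a_{i_1\cdots i_m}=\frac{1}{g+h(i_1+\cdots+i_m)}$, $i_j\in\{1,\dots,n\}$. Then $\mathcal{A}$ is positive definite if and only if $g+mh>0$ and $g+nmh>0$.
   Context: A tensor $\mathcal{A}$ of even order $m$ is positive definite if $\mathcal{A}x^m=\sum_{i_1,\dots,i_m}a_{i_1\cdots i_m}x_{i_1}\cdots x_{i_m}>0$ for all nonzero $x\in\mathbb{R}^n$. *)

theory Defs
  imports Complex_Main "HOL-Library.FuncSet"
begin

text \<open>A real tensor of order m and dimension n is a function from index tuples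
  (i_1,...,i_m) with i_j in {1..n}, represented as maps from {0..<m} to {1..n}
  (extensional, via PiE), to reals. Vectors x in R^n are functions nat => real
  whose relevant coordinates are x 1, ..., x n.\<close>

definition tensor_form :: "nat \<Rightarrow> nat \<Rightarrow> ((nat \<Rightarrow> nat) \<Rightarrow> real) \<Rightarrow> (nat \<Rightarrow> real) \<Rightarrow> real" where
  "tensor_form m n A x =
     (\<Sum>\<iota>\<in>PiE {0..<m} (\<lambda>_. {1..n}). A \<iota> * (\<Prod>j<m. x (\<iota> j)))"

definition positive_definite_tensor :: "nat \<Rightarrow> nat \<Rightarrow> ((nat \<Rightarrow> nat) \<Rightarrow> real) \<Rightarrow> bool" where
  "positive_definite_tensor m n A \<longleftrightarrow>
     (\<forall>x :: nat \<Rightarrow> real. (\<exists>i\<in>{1..n}. x i \<noteq> 0) \<longrightarrow> tensor_form m n A x > 0)"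

definition cauchy_hankel :: "nat \<Rightarrow> real \<Rightarrow> real \<Rightarrow> (nat \<Rightarrow> nat) \<Rightarrow> real" where
  "cauchy_hankel m g h = (\<lambda>\<iota>. 1 / (g + h * real (\<Sum>j<m. \<iota> j)))"

end

theory Submission imports Defs "HOL-Computational_Algebra.Polynomial" begin

lemma expand_pow:
  fixes f :: "nat \<Rightarrow> real"
  shows "(\<Sum>\<iota>\<in>PiE {0..<m} (\<lambda>_. {1..n}). \<Prod>j<m. f (\<iota> j)) = (\<Sum>i=1..n. f i)^m"
proof -
  have "(\<Prod>x\<in>{0..<m}. \<Sum>y\<in>{1..n}. f y) = (\<Sum>\<iota>\<in>PiE {0..<m} (\<lambda>_. {1..n}). \<Prod>x\<in>{0..<m}. f (\<iota> x))"
    by (rule prod_sum_PiE) auto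
  then show ?thesis by (simp add: lessThan_atLeast0)
qed

lemma basis_form:
  fixes A :: "(nat \<Rightarrow> nat) \<Rightarrow> real"
  assumes c: "c \<in> {1..n}" and m: "0 < m"
  shows "tensor_form m n A (\<lambda>k. if k = c then 1 else 0) = A (\<lambda>j\<in>{0..<m}. c)"
proof -
  let ?I = "PiE {0..<m} (\<lambda>_. {1..n::nat})"
  let ?i0 = "(\<lambda>j\<in>{0..<m}. c)"
  have i0: "?i0 \<in> ?I" using c by auto
  have z: "A \<iota> * (\<Prod>j<m. (\<lambda>k. if k = c then 1 else 0) (\<iota> j)) = 0"
    if "\<iota> \<in> ?I - {?i0}" for \<iota>
  proof -
    from that have "\<iota> \<noteq> ?i0" "\<iota> \<in> extensional {0..<m}" by (auto simp: PiE_def)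
    then obtain j where "j < m" "\<iota> j \<noteq> c"
      by (metis (no_types, lifting) atLeastLessThan_iff extensionalityI restrict_apply' restrict_extensional zero_le)
    then show ?thesis by (auto intro!: prod_zero)
  qed
  have "tensor_form m n A (\<lambda>k. if k = c then 1 else 0) =
      A ?i0 * (\<Prod>j<m. (\<lambda>k. if k = c then 1 else (0::real)) (?i0 j)) +
      (\<Sum>\<iota>\<in>?I - {?i0}. A \<iota> * (\<Prod>j<m. (\<lambda>k. if k = c then 1 else 0) (\<iota> j)))"
    unfolding tensor_form_def using i0 by (subst sum.remove[of _ ?i0]) (auto simp: finite_PiE)
  also have "(\<Sum>\<iota>\<in>?I - {?i0}. A \<iota> * (\<Prod>j<m. (\<lambda>k. if k = c then 1 else 0) (\<iota> j))) = 0"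
    by (rule sum.neutral) (use z in blast)
  also have "A ?i0 * (\<Prod>j<m. (\<lambda>k. if k = c then 1 else (0::real)) (?i0 j)) + 0 = A ?i0" by simp
  finally show ?thesis .
qed


lemma deriv_identity:
  fixes x :: "nat \<Rightarrow> real"
  shows "(\<Sum>\<iota>\<in>PiE {0..<m} (\<lambda>_. {1..n}). (\<Prod>j<m. x (\<iota> j)) * exp (-((g + h * real (\<Sum>j<m. \<iota> j)) * T)))
     = exp (-(g*T)) * (\<Sum>i=1..n. x i * exp (-(h * real i * T)))^m"
proof -
  have "(\<Prod>j<m. x (\<iota> j)) * exp (-((g + h * real (\<Sum>j<m. \<iota> j)) * T))
        = exp (-(g*T)) * (\<Prod>j<m. x (\<iota> j) * exp (-(h * real (\<iota> j) * T)))" for \<iota> :: "nat \<Rightarrow> nat"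
  proof -
    have "-((g + h * real (\<Sum>j<m. \<iota> j)) * T) = -(g*T) + (\<Sum>j<m. -(h * real (\<iota> j) * T))"
      by (simp add: algebra_simps sum_distrib_left sum_distrib_right sum_negf)
    then have "exp (-((g + h * real (\<Sum>j<m. \<iota> j)) * T)) = exp (-(g*T)) * (\<Prod>j<m. exp (-(h * real (\<iota> j) * T)))"
      by (simp only: exp_add exp_sum[OF finite_lessThan])
    then show ?thesis by (simp add: prod.distrib)
  qed
  then have "(\<Sum>\<iota>\<in>PiE {0..<m} (\<lambda>_. {1..n}). (\<Prod>j<m. x (\<iota> j)) * exp (-((g + h * real (\<Sum>j<m. \<iota> j)) * T)))
     = exp (-(g*T)) * (\<Sum>\<iota>\<in>PiE {0..<m} (\<lambda>_. {1..n}). \<Prod>j<m. x (\<iota> j) * exp (-(h * real (\<iota> j) * T)))"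
    by (simp add: sum_distrib_left)
  also have "\<dots> = exp (-(g*T)) * (\<Sum>i=1..n. x i * exp (-(h * real i * T)))^m"
    by (subst expand_pow[of "\<lambda>i. x i * exp (-(h * real i * T))"]) simp
  finally show ?thesis .
qed


lemma exp_neg_tendsto:
  fixes c :: real assumes "c > 0"
  shows "((\<lambda>T. exp (-(c*T))) \<longlongrightarrow> 0) at_top"
proof -
  have "filterlim (\<lambda>T. c*T) at_top at_top"
    using filterlim_tendsto_pos_mult_at_top[OF tendsto_const assms filterlim_ident] .
  then have "filterlim (\<lambda>T. -(c*T)) at_bot at_top"
    by (simp add: filterlim_uminus_at_top)
  then show ?thesis by (rule filterlim_compose[OF exp_at_bot])
qed

theorem theorem5p1:
  fixes m n :: nat and g h :: real
  assumes "even m" and "m \<ge> 2" and "n \<ge> 2"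
    and "h \<noteq> 0" and "g / h \<notin> \<int>"
  shows "positive_definite_tensor m n (cauchy_hankel m g h) \<longleftrightarrow>
           (g + real m * h > 0 \<and> g + real n * real m * h > 0)"
proof
  assume pd: "positive_definite_tensor m n (cauchy_hankel m g h)"
  have m0: "0 < m" using assms by simp
  have gen: "g + h * (real m * real c) > 0" if c: "c \<in> {1..n}" for c
  proof -
    have "tensor_form m n (cauchy_hankel m g h) (\<lambda>k. if k = c then 1 else 0) > 0"
      using pd c unfolding positive_definite_tensor_def by (intro pd[unfolded positive_definite_tensor_def, rule_format]) auto
    also have "tensor_form m n (cauchy_hankel m g h) (\<lambda>k. if k = c then 1 else 0)
      = 1 / (g + h * real (\<Sum>j<m. (\<lambda>j\<in>{0..<m}. c) j))"
      using basis_form[OF c m0] by (simp add: cauchy_hankel_def)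
    also have "(\<Sum>j<m. (\<lambda>j\<in>{0..<m}. c) j) = m * c" by simp
    finally show ?thesis by (simp add: zero_less_divide_1_iff)
  qed
  show "g + real m * h > 0 \<and> g + real n * real m * h > 0"
    using gen[of 1] gen[of n] assms by (auto simp: algebra_simps)
next
  assume pos: "g + real m * h > 0 \<and> g + real n * real m * h > 0"
  let ?I = "PiE {0..<m} (\<lambda>_. {1..n::nat})"
  define c where "c \<iota> = g + h * real (\<Sum>j<m. \<iota> j)" for \<iota> :: "nat \<Rightarrow> nat"
  have fin: "finite ?I" by (simp add: finite_PiE)
  have cpos: "c \<iota> > 0" if "\<iota> \<in> ?I" for \<iota>
  proof -
    have lo: "m * 1 \<le> (\<Sum>j<m. \<iota> j)"
      using sum_mono[of "{..<m}" "\<lambda>_. 1::nat" \<iota>] that by (auto simp: PiE_def Pi_def)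
    have hi: "(\<Sum>j<m. \<iota> j) \<le> m * n"
      using sum_mono[of "{..<m}" \<iota> "\<lambda>_. n"] that by (auto simp: PiE_def Pi_def)
    show ?thesis
    proof (cases "h \<ge> 0")
      case True
      have lo': "real m \<le> real (\<Sum>j<m. \<iota> j)" using lo by (metis mult_1_right of_nat_le_iff)
      have "h * real m \<le> h * real (\<Sum>j<m. \<iota> j)" using lo' True by (rule mult_left_mono)
      then show ?thesis using pos by (simp add: c_def algebra_simps)
    next
      case False
      have hi': "real (\<Sum>j<m. \<iota> j) \<le> real m * real n" using hi by (metis of_nat_mult of_nat_le_iff)
      have "h * (real m * real n) \<le> h * real (\<Sum>j<m. \<iota> j)" using hi' False
        by (intro mult_left_mono_neg) auto
      then show ?thesis using pos by (simp add: c_def algebra_simps)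
    qed
  qed
  show "positive_definite_tensor m n (cauchy_hankel m g h)"
    unfolding positive_definite_tensor_def
  proof (intro allI impI)
    fix x :: "nat \<Rightarrow> real"
    assume "\<exists>i\<in>{1..n}. x i \<noteq> 0"
    then obtain i0 where i0: "i0 \<in> {1..n}" "x i0 \<noteq> 0" by blast
    define y where "y \<iota> = (\<Prod>j<m. x (\<iota> j))" for \<iota> :: "nat \<Rightarrow> nat"
    define F where "F = (\<Sum>\<iota>\<in>?I. y \<iota> / c \<iota>)"
    define G where "G T = (\<Sum>\<iota>\<in>?I. y \<iota> * ((1 - exp (-(c \<iota> * T))) / c \<iota>))" for T :: real
    define D where "D T = (\<Sum>\<iota>\<in>?I. y \<iota> * exp (-(c \<iota> * T)))" for T :: real
    define P where "P T = (\<Sum>i=1..n. x i * exp (-(h * real i * T)))" for T :: real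
    have F: "tensor_form m n (cauchy_hankel m g h) x = F"
      unfolding tensor_form_def F_def cauchy_hankel_def y_def c_def by simp
    have DP: "D T = exp (-(g*T)) * (P T)^m" for T
      unfolding D_def P_def y_def c_def by (rule deriv_identity)
    have Dnn: "D T \<ge> 0" for T
      unfolding DP using assms(1) by (simp add: zero_le_even_power)
    have deriv: "(G has_real_derivative D T) (at T)" for T
    proof -
      have "((\<lambda>T. y \<iota> * ((1 - exp (-(c \<iota> * T))) / c \<iota>)) has_real_derivative y \<iota> * exp (-(c \<iota> * T))) (at T)"
        if "\<iota> \<in> ?I" for \<iota>
      proof -
        have k: "c \<iota> \<noteq> 0" using cpos[OF that] by simp
        have e: "((\<lambda>T. exp (-(c \<iota>*T))) has_real_derivative exp (-(c \<iota>*T)) * (-(c \<iota>))) (at T)"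
          by (rule derivative_eq_intros | simp)+
        have "((\<lambda>T. y \<iota> * ((1 - exp (-(c \<iota> * T))) / c \<iota>)) has_real_derivative
                 y \<iota> * ((0 - exp (-(c \<iota>*T)) * (-(c \<iota>))) / c \<iota>)) (at T)"
          by (intro DERIV_cmult DERIV_cdivide DERIV_diff DERIV_const e)
        then show ?thesis using k by simp
      qed
      then show ?thesis unfolding G_def D_def
        by (rule DERIV_sum)
    qed
    have G0: "G 0 = 0" by (simp add: G_def)
    have mono: "G a \<le> G b" if "a \<le> b" for a b
    proof (rule DERIV_nonneg_imp_nondecreasing[OF that])
      fix z show "\<exists>y. DERIV G z :> y \<and> y \<ge> 0" using deriv[of z] Dnn[of z] by blast
    qed
    have lim: "(G \<longlongrightarrow> F) at_top"
    proof -
      have "((\<lambda>T. y \<iota> * ((1 - exp (-(c \<iota> * T))) / c \<iota>)) \<longlongrightarrow> y \<iota> * ((1 - 0) / c \<iota>)) at_top"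
        if "\<iota> \<in> ?I" for \<iota>
        using cpos[OF that] by (intro tendsto_intros exp_neg_tendsto) auto
      then have "(G \<longlongrightarrow> (\<Sum>\<iota>\<in>?I. y \<iota> * ((1 - 0) / c \<iota>))) at_top"
        unfolding G_def by (rule tendsto_sum)
      then show ?thesis by (simp add: F_def)
    qed
    have G1F: "G 1 \<le> F"
    proof (rule tendsto_le[OF _ lim tendsto_const])
      show "\<forall>\<^sub>F T in at_top. G 1 \<le> G T"
        using eventually_ge_at_top[of "1::real"] by eventually_elim (rule mono)
    qed simp
    show "tensor_form m n (cauchy_hankel m g h) x > 0"
    proof (rule ccontr)
      assume "\<not> ?thesis"
      then have "F \<le> 0" using F by simp
      then have Gz: "G t = 0" if "0 \<le> t" "t \<le> 1" for t
        using mono[of 0 t] mono[of t 1] that G0 G1F by simp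
      have Pz: "P t = 0" if t: "t \<in> {0<..<1}" for t
      proof -
        have "D t = 0"
        proof (rule DERIV_local_const[OF deriv])
          show "0 < min t (1 - t)" using t by simp
          show "\<forall>y. \<bar>t - y\<bar> < min t (1 - t) \<longrightarrow> G t = G y"
          proof (intro allI impI)
            fix z assume "\<bar>t - z\<bar> < min t (1 - t)"
            then have "0 \<le> z" "z \<le> 1" by (auto simp: abs_less_iff)
            then show "G t = G z" using t Gz by simp
          qed
        qed
        then show ?thesis using DP[of t] assms(2) by simp
      qed
      define q :: "real poly" where "q = (\<Sum>i\<in>{1..n}. monom (x i) i)"
      have qP: "poly q (exp (-(h*t))) = P t" for t
      proof -
        have "exp (-(h * real i * t)) = exp (-(h*t)) ^ i" for i
          using exp_of_nat_mult[of i "-(h*t)"] by (simp add: algebra_simps)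
        then show ?thesis unfolding q_def P_def by (simp add: poly_sum poly_monom)
      qed
      have "coeff q i0 = x i0" unfolding q_def using i0(1) by (simp add: coeff_sum)
      then have "q \<noteq> 0" using i0 by auto
      then have finr: "finite {z. poly q z = 0}" by (rule poly_roots_finite)
      have "(\<lambda>t. exp (-(h*t))) ` {0<..<1} \<subseteq> {z. poly q z = 0}"
        using Pz qP by auto
      then have "finite ((\<lambda>t. exp (-(h*t))) ` {0<..<(1::real)})" using finr finite_subset by blast
      moreover have "inj_on (\<lambda>t. exp (-(h*t))) {0<..<(1::real)}"
        using assms(4) by (auto simp: inj_on_def)
      ultimately have "finite {0<..<(1::real)}" by (rule finite_imageD)
      then show False using infinite_Ioo[of "0::real" 1] by simp
    qed
  qed
qed

end
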